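(* Let $\omega\in\mathbb{R}^n$ be resonant of order $r\ge1$. Then there exist a matrix $A\in GL_n(\mathbb{Z})$ and positive integers $d_1,\dots,d_r$ with $d_i$ dividing $d_{i+1}$ for $1\le i<r$, such that $(d_1e_1,\dots,d_re_r)$ is a basis of the resonance module $R(A\omega)$, where $(e_1,\dots,e_n)$ is the standard basis of $\mathbb{R}^n$. In particular $A\omega=(w/T,\omega')\in\mathbb{Q}^r\times\mathbb{R}^{n-r}$, where $\omega'\in\mathbb{R}^{n-r}$ is non-resonant and $w/T\in\mathbb{Q}^r$ is a rational vector of period $T=d_r$. When $\omega$ is rational (i.e. $r=n$), one obtains $n$ integers $d_1|d_2|\cdots|d_n$ with $d_n$ equal to the period of $\omega$, and a matrix $A\in GL_n(\mathbb{Z})$ such that $A\omega=(a_1/d_1,a_2/d_2,\dots,a_n/d_n)$ with each fraction $a_i/d_i$ irreducible ($a_i\in\mathbb{Z}$, $\gcd(a_i,d_i)=1$).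
   Context: For $\omega\in\mathbb{R}^m$, the resonance module $R(\omega)$ is the subgroup $\{k\in\mathbb{Z}^m:\langle k,\omega\rangle\in\mathbb{Z}\}$ of $\mathbb{Z}^m$; its rank is the resonance order of $\omega$. The vector $\omega$ is resonant if $R(\omega)\ne\{0\}$, non-resonant otherwise. A rational vector (all coordinates rational) has period equal to the least common denominator of its coordinates. *)

theory Defs
  imports Complex_Main
begin

text \<open>Vectors of \<open>\<real>^n\<close> / \<open>\<int>^n\<close> are represented as functions on \<open>nat\<close>,
  only the coordinates \<open>0..<n\<close> being relevant (0-based indexing).\<close>

definition zvec :: "nat \<Rightarrow> (nat \<Rightarrow> int) set" where
  "zvec n = {k. \<forall>i\<ge>n. k i = 0}"

definition resonance_module :: "nat \<Rightarrow> (nat \<Rightarrow> real) \<Rightarrow> (nat \<Rightarrow> int) set" where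
  "resonance_module n \<omega> =
     {k \<in> zvec n. (\<Sum>i<n. of_int (k i) * \<omega> i) \<in> \<int>}"

definition zlin_indep :: "nat \<Rightarrow> (nat \<Rightarrow> nat \<Rightarrow> int) \<Rightarrow> bool" where
  "zlin_indep r b \<longleftrightarrow>
     (\<forall>c :: nat \<Rightarrow> int. (\<forall>j. (\<Sum>i<r. c i * b i j) = 0) \<longrightarrow> (\<forall>i<r. c i = 0))"

definition zrank :: "(nat \<Rightarrow> int) set \<Rightarrow> nat" where
  "zrank M = (GREATEST r. \<exists>b. (\<forall>i<r. b i \<in> M) \<and> zlin_indep r b)"

definition is_zbasis :: "(nat \<Rightarrow> int) set \<Rightarrow> nat \<Rightarrow> (nat \<Rightarrow> nat \<Rightarrow> int) \<Rightarrow> bool" where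
  "is_zbasis M r b \<longleftrightarrow> zlin_indep r b \<and>
     M = {v. \<exists>c :: nat \<Rightarrow> int. v = (\<lambda>j. \<Sum>i<r. c i * b i j)}"

definition resonance_order :: "nat \<Rightarrow> (nat \<Rightarrow> real) \<Rightarrow> nat" where
  "resonance_order n \<omega> = zrank (resonance_module n \<omega>)"

definition resonant :: "nat \<Rightarrow> (nat \<Rightarrow> real) \<Rightarrow> bool" where
  "resonant n \<omega> \<longleftrightarrow> resonance_module n \<omega> \<noteq> {\<lambda>_. 0}"

definition rational_vec :: "nat \<Rightarrow> (nat \<Rightarrow> real) \<Rightarrow> bool" where
  "rational_vec n x \<longleftrightarrow> (\<forall>i<n. x i \<in> \<rat>)"

definition period :: "nat \<Rightarrow> (nat \<Rightarrow> real) \<Rightarrow> nat" where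
  "period n x = (LEAST T. T > 0 \<and> (\<forall>i<n. real T * x i \<in> \<int>))"

definition GL_int :: "nat \<Rightarrow> (nat \<Rightarrow> nat \<Rightarrow> int) set" where
  "GL_int n = {A. \<exists>B. (\<forall>i<n. \<forall>j<n. (\<Sum>k<n. A i k * B k j) = (if i = j then 1 else 0))
                     \<and> (\<forall>i<n. \<forall>j<n. (\<Sum>k<n. B i k * A k j) = (if i = j then 1 else 0))}"

definition mat_vec :: "nat \<Rightarrow> (nat \<Rightarrow> nat \<Rightarrow> int) \<Rightarrow> (nat \<Rightarrow> real) \<Rightarrow> nat \<Rightarrow> real" where
  "mat_vec n A \<omega> = (\<lambda>i. \<Sum>j<n. of_int (A i j) * \<omega> j)"

definition std_basis :: "nat \<Rightarrow> nat \<Rightarrow> int" where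
  "std_basis i = (\<lambda>j. if j = i then 1 else 0)"

end

theory Submission
  imports Defs
begin


definition mmul :: "nat \<Rightarrow> (nat \<Rightarrow> nat \<Rightarrow> int) \<Rightarrow> (nat \<Rightarrow> nat \<Rightarrow> int) \<Rightarrow> nat \<Rightarrow> nat \<Rightarrow> int" where
  "mmul n A B = (\<lambda>i j. \<Sum>k<n. A i k * B k j)"

definition unimod :: "nat \<Rightarrow> (nat \<Rightarrow> nat \<Rightarrow> int) \<Rightarrow> (nat \<Rightarrow> nat \<Rightarrow> int) \<Rightarrow> bool" where
  "unimod n A B \<longleftrightarrow> (\<forall>i<n. \<forall>j<n. mmul n A B i j = (if i = j then 1 else 0))
                  \<and> (\<forall>i<n. \<forall>j<n. mmul n B A i j = (if i = j then 1 else 0))"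

definition window :: "nat \<Rightarrow> nat \<Rightarrow> nat \<Rightarrow> (nat \<Rightarrow> nat \<Rightarrow> int) \<Rightarrow> bool" where
  "window n lo hi C \<longleftrightarrow> (\<forall>i<n. \<forall>j<n. (\<not>(lo \<le> i \<and> i < hi) \<or> \<not>(lo \<le> j \<and> j < hi)) \<longrightarrow> C i j = (if i = j then 1 else 0))"

definition mvi :: "nat \<Rightarrow> (nat \<Rightarrow> nat \<Rightarrow> int) \<Rightarrow> (nat \<Rightarrow> int) \<Rightarrow> nat \<Rightarrow> int" where
  "mvi n A k = (\<lambda>i. \<Sum>j<n. A i j * k j)"

definition tr :: "(nat \<Rightarrow> nat \<Rightarrow> int) \<Rightarrow> nat \<Rightarrow> nat \<Rightarrow> int" where
  "tr A = (\<lambda>i j. A j i)"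

definition idm :: "nat \<Rightarrow> nat \<Rightarrow> int" where
  "idm = (\<lambda>i j. if i = j then 1 else 0)"

lemma delta_l: "finite S \<Longrightarrow> (\<Sum>k\<in>S. (if i = k then 1 else 0) * f k) = (if i \<in> S then f i else (0::'a::comm_ring_1))"
proof -
  assume "finite S"
  have "(\<Sum>k\<in>S. (if i = k then 1 else 0) * f k) = (\<Sum>k\<in>S. if i = k then f k else 0)"
    by (rule sum.cong) auto
  thus ?thesis using \<open>finite S\<close> by (simp add: sum.delta)
qed

lemma delta_r: "finite S \<Longrightarrow> (\<Sum>k\<in>S. f k * (if k = j then 1 else 0)) = (if j \<in> S then f j else (0::'a::comm_ring_1))"
proof -
  assume "finite S"
  have "(\<Sum>k\<in>S. f k * (if k = j then 1 else 0)) = (\<Sum>k\<in>S. if j = k then f k else 0)"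
    by (rule sum.cong) auto
  thus ?thesis using \<open>finite S\<close> by (simp add: sum.delta)
qed

lemma unimod_GL: "unimod n A B \<Longrightarrow> A \<in> GL_int n"
  unfolding unimod_def GL_int_def mmul_def by blast

lemma unimod_sym: "unimod n A B \<Longrightarrow> unimod n B A"
  unfolding unimod_def by blast

lemma mmul_assoc: "mmul n (mmul n A B) C = mmul n A (mmul n B C)"
proof (intro ext)
  fix i j
  have "mmul n (mmul n A B) C i j = (\<Sum>k<n. \<Sum>l<n. A i l * B l k * C k j)"
    unfolding mmul_def by (simp add: sum_distrib_right)
  also have "\<dots> = (\<Sum>l<n. \<Sum>k<n. A i l * B l k * C k j)" by (rule sum.swap)
  also have "\<dots> = mmul n A (mmul n B C) i j"
    unfolding mmul_def by (simp add: sum_distrib_left mult.assoc)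
  finally show "mmul n (mmul n A B) C i j = mmul n A (mmul n B C) i j" .
qed

lemma mmul_idm_left: "i < n \<Longrightarrow> mmul n idm A i j = A i j"
  unfolding mmul_def idm_def by (simp add: delta_l)

lemma unimod_idm: "unimod n idm idm"
  unfolding unimod_def mmul_def idm_def by (simp add: delta_l)

lemma mmul_cong_mid:
  assumes "\<And>i j. i < n \<Longrightarrow> j < n \<Longrightarrow> X i j = Y i j" "i < n" "j < n"
  shows "mmul n A (mmul n X B) i j = mmul n A (mmul n Y B) i j"
  using assms unfolding mmul_def by (auto intro!: sum.cong)

lemma mmul_eq_idm:
  assumes "\<And>i j. i<n \<Longrightarrow> j<n \<Longrightarrow> X i j = (if i = j then 1 else 0)" "i < n"
  shows "mmul n X B i j = B i j"
proof -
  have "mmul n X B i j = (\<Sum>k<n. (if i = k then 1 else 0) * B k j)"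
    unfolding mmul_def using assms by (intro sum.cong) auto
  thus ?thesis using assms by (simp add: delta_l)
qed

lemma unimod_mul:
  assumes "unimod n A B" "unimod n A' B'"
  shows "unimod n (mmul n A' A) (mmul n B B')"
proof -
  have 1: "mmul n (mmul n A' A) (mmul n B B') i j = (if i = j then 1 else 0)" if "i<n" "j<n" for i j
  proof -
    have "mmul n (mmul n A' A) (mmul n B B') i j = mmul n A' (mmul n (mmul n A B) B') i j"
      by (simp add: mmul_assoc)
    also have "\<dots> = mmul n A' (mmul n idm B') i j"
      using assms(1) that by (intro mmul_cong_mid) (auto simp: unimod_def idm_def)
    also have "\<dots> = mmul n A' B' i j"
      using that unfolding mmul_def[of n A'] by (auto intro!: sum.cong simp: mmul_idm_left)
    finally show ?thesis using assms(2) that by (simp add: unimod_def)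
  qed
  have 2: "mmul n (mmul n B B') (mmul n A' A) i j = (if i = j then 1 else 0)" if "i<n" "j<n" for i j
  proof -
    have "mmul n (mmul n B B') (mmul n A' A) i j = mmul n B (mmul n (mmul n B' A') A) i j"
      by (simp add: mmul_assoc)
    also have "\<dots> = mmul n B (mmul n idm A) i j"
      using assms(2) that by (intro mmul_cong_mid) (auto simp: unimod_def idm_def)
    also have "\<dots> = mmul n B A i j"
      using that unfolding mmul_def[of n B] by (auto intro!: sum.cong simp: mmul_idm_left)
    finally show ?thesis using assms(1) that by (simp add: unimod_def)
  qed
  show ?thesis using 1 2 unfolding unimod_def by blast
qed

lemma window_mul:
  assumes "window n lo hi A" "window n lo hi B"
  shows "window n lo hi (mmul n A B)"
  unfolding window_def
proof (intro allI impI)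
  fix i j assume ij: "i < n" "j < n" "\<not> (lo \<le> i \<and> i < hi) \<or> \<not> (lo \<le> j \<and> j < hi)"
  show "mmul n A B i j = (if i = j then 1 else 0)"
  proof (cases "lo \<le> i \<and> i < hi")
    case False
    hence "mmul n A B i j = (\<Sum>k<n. (if i = k then 1 else 0) * B k j)"
      using assms(1) ij unfolding mmul_def window_def by (auto intro!: sum.cong)
    also have "\<dots> = B i j" using ij by (simp add: delta_l delta_r)
    finally show ?thesis using assms(2) ij False unfolding window_def by auto
  next
    case True
    hence F: "\<not> (lo \<le> j \<and> j < hi)" using ij by auto
    hence "mmul n A B i j = (\<Sum>k<n. A i k * (if k = j then 1 else 0))"
      using assms(2) ij unfolding mmul_def window_def by (auto intro!: sum.cong)
    also have "\<dots> = A i j" using ij by (simp add: delta_l delta_r)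
    finally show ?thesis using assms(1) ij F unfolding window_def by auto
  qed
qed

lemma unimod_tr: "unimod n A B \<Longrightarrow> unimod n (tr A) (tr B)"
  unfolding unimod_def mmul_def tr_def by (simp add: mult.commute)

lemma window_tr: "window n lo hi A \<Longrightarrow> window n lo hi (tr A)"
  unfolding window_def tr_def by auto

lemma mat_vec_mmul: "mat_vec n (mmul n A B) \<omega> i = mat_vec n A (mat_vec n B \<omega>) i"
proof -
  have "mat_vec n (mmul n A B) \<omega> i = (\<Sum>j<n. \<Sum>k<n. of_int (A i k) * of_int (B k j) * \<omega> j)"
    unfolding mat_vec_def mmul_def by (simp add: sum_distrib_right)
  also have "\<dots> = (\<Sum>k<n. \<Sum>j<n. of_int (A i k) * of_int (B k j) * \<omega> j)"
    by (rule sum.swap)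
  also have "\<dots> = mat_vec n A (mat_vec n B \<omega>) i"
    unfolding mat_vec_def by (simp add: sum_distrib_left mult.assoc)
  finally show ?thesis .
qed

lemma mvi_mmul: "mvi n (mmul n A B) k i = mvi n A (mvi n B k) i"
proof -
  have "mvi n (mmul n A B) k i = (\<Sum>j<n. \<Sum>l<n. A i l * B l j * k j)"
    unfolding mvi_def mmul_def by (simp add: sum_distrib_right)
  also have "\<dots> = (\<Sum>l<n. \<Sum>j<n. A i l * B l j * k j)"
    by (rule sum.swap)
  also have "\<dots> = mvi n A (mvi n B k) i"
    unfolding mvi_def by (simp add: sum_distrib_left mult.assoc)
  finally show ?thesis .
qed

lemma mvi_inv: assumes "unimod n A B" "j < n" shows "mvi n B (mvi n A k) j = k j"
proof -
  have "mvi n B (mvi n A k) j = mvi n (mmul n B A) k j" by (simp add: mvi_mmul)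
  also have "\<dots> = (\<Sum>i<n. (if j = i then 1 else 0) * k i)"
    unfolding mvi_def using assms by (intro sum.cong) (auto simp: unimod_def)
  finally show ?thesis using assms by (simp add: delta_l)
qed

lemma mat_vec_inv: assumes "unimod n A B" "j < n" shows "mat_vec n B (mat_vec n A w) j = w j"
proof -
  have "mat_vec n B (mat_vec n A w) j = mat_vec n (mmul n B A) w j" by (simp add: mat_vec_mmul)
  also have "\<dots> = (\<Sum>i<n. (if j = i then 1 else 0) * w i)"
    unfolding mat_vec_def using assms by (intro sum.cong) (auto simp: unimod_def)
  finally show ?thesis using assms by (simp add: delta_l)
qed




definition elem :: "nat \<Rightarrow> nat \<Rightarrow> int \<Rightarrow> nat \<Rightarrow> nat \<Rightarrow> int" where
  "elem i j c = (\<lambda>a b. (if a = b then 1 else 0) + (if a = i \<and> b = j then c else 0))"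

definition sw :: "nat \<Rightarrow> nat \<Rightarrow> nat \<Rightarrow> nat" where
  "sw i j a = (if a = i then j else if a = j then i else a)"

definition swm :: "nat \<Rightarrow> nat \<Rightarrow> nat \<Rightarrow> nat \<Rightarrow> int" where
  "swm i j = (\<lambda>a b. if sw i j a = b then 1 else 0)"

lemma delta_c: "finite S \<Longrightarrow> (\<Sum>k\<in>S. (if k = j then c else 0) * f k) = (if j \<in> S then c * f j else (0::'a::comm_ring_1))"
proof -
  assume "finite S"
  have "(\<Sum>k\<in>S. (if k = j then c else 0) * f k) = (\<Sum>k\<in>S. if j = k then c * f k else 0)"
    by (rule sum.cong) auto
  thus ?thesis using \<open>finite S\<close> by (simp add: sum.delta)
qed

lemma mmul_elem: assumes "a < n" "j < n"
  shows "mmul n (elem i j c) B a b = B a b + (if a = i then c * B j b else 0)"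
proof -
  have "mmul n (elem i j c) B a b = (\<Sum>k<n. (if a = k then 1 else 0) * B k b) + (if a = i then (\<Sum>k<n. (if k = j then c else 0) * B k b) else 0)"
    unfolding mmul_def elem_def by (simp add: sum.distrib distrib_right cong: if_cong)
  also have "\<dots> = B a b + (if a = i then c * B j b else 0)"
    using assms by (simp add: delta_l delta_c)
  finally show ?thesis .
qed

lemma mvi_elem: assumes "a < n" "j < n"
  shows "mvi n (elem i j c) P a = P a + (if a = i then c * P j else 0)"
proof -
  have "mvi n (elem i j c) P a = (\<Sum>k<n. (if a = k then 1 else 0) * P k) + (if a = i then (\<Sum>k<n. (if k = j then c else 0) * P k) else 0)"
    unfolding mvi_def elem_def by (simp add: sum.distrib distrib_right cong: if_cong)
  also have "\<dots> = P a + (if a = i then c * P j else 0)"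
    using assms by (simp add: delta_l delta_c)
  finally show ?thesis .
qed

lemma unimod_elem: assumes "i \<noteq> j" "i < n" "j < n"
  shows "unimod n (elem i j c) (elem i j (-c))"
  unfolding unimod_def using assms by (simp add: mmul_elem) (auto simp: elem_def)

lemma window_elem: "lo \<le> i \<Longrightarrow> i < hi \<Longrightarrow> lo \<le> j \<Longrightarrow> j < hi \<Longrightarrow> window n lo hi (elem i j c)"
  unfolding window_def elem_def by auto

lemma sw_lt: "i < n \<Longrightarrow> j < n \<Longrightarrow> a < n \<Longrightarrow> sw i j a < n"
  unfolding sw_def by auto

lemma mmul_swm: assumes "a < n" "i < n" "j < n"
  shows "mmul n (swm i j) B a b = B (sw i j a) b"
proof -
  have "mmul n (swm i j) B a b = (\<Sum>k<n. (if sw i j a = k then 1 else 0) * B k b)"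
    unfolding mmul_def swm_def by simp
  thus ?thesis using assms sw_lt by (simp add: delta_l)
qed

lemma mvi_swm: assumes "a < n" "i < n" "j < n"
  shows "mvi n (swm i j) P a = P (sw i j a)"
proof -
  have "mvi n (swm i j) P a = (\<Sum>k<n. (if sw i j a = k then 1 else 0) * P k)"
    unfolding mvi_def swm_def by simp
  thus ?thesis using assms sw_lt by (simp add: delta_l)
qed

lemma unimod_swm: assumes "i < n" "j < n" shows "unimod n (swm i j) (swm i j)"
  unfolding unimod_def using assms by (simp add: mmul_swm sw_lt) (auto simp: swm_def sw_def)

lemma window_swm: "lo \<le> i \<Longrightarrow> i < hi \<Longrightarrow> lo \<le> j \<Longrightarrow> j < hi \<Longrightarrow> window n lo hi (swm i j)"
  unfolding window_def swm_def sw_def by auto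

lemma window_idm: "window n lo hi idm"
  unfolding window_def idm_def by auto

lemma mvi_idm: "a < n \<Longrightarrow> mvi n idm P a = P a"
  unfolding mvi_def idm_def by (simp add: delta_l)

lemma mvi_window_out: "window n lo hi C \<Longrightarrow> i < n \<Longrightarrow> \<not>(lo \<le> i \<and> i < hi) \<Longrightarrow> mvi n C P i = P i"
proof -
  assume a: "window n lo hi C" "i < n" "\<not>(lo \<le> i \<and> i < hi)"
  have "mvi n C P i = (\<Sum>k<n. (if i = k then 1 else 0) * P k)"
    unfolding mvi_def using a by (intro sum.cong) (auto simp: window_def)
  thus ?thesis using a by (simp add: delta_l)
qed

lemma mat_vec_window_out: "window n lo hi C \<Longrightarrow> i < n \<Longrightarrow> \<not>(lo \<le> i \<and> i < hi) \<Longrightarrow> mat_vec n C w i = w i"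
proof -
  assume a: "window n lo hi C" "i < n" "\<not>(lo \<le> i \<and> i < hi)"
  have "mat_vec n C w i = (\<Sum>k<n. (if i = k then 1 else 0) * w k)"
    unfolding mat_vec_def using a by (intro sum.cong) (auto simp: window_def)
  thus ?thesis using a by (simp add: delta_l)
qed

lemma abs_step: fixes x y :: int assumes "y \<noteq> 0" "\<bar>y\<bar> \<le> \<bar>x\<bar>"
  shows "\<bar>x + (- (sgn x * sgn y)) * y\<bar> < \<bar>x\<bar>"
  using assms by (cases "x > 0"; cases "y > 0"; cases "x = 0") (auto simp: sgn_if)

definition mu :: "nat \<Rightarrow> nat \<Rightarrow> (nat \<Rightarrow> int) \<Rightarrow> nat" where
  "mu lo hi P = (\<Sum>i\<in>{lo..<hi}. nat \<bar>P i\<bar>)"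

lemma euclid:
  assumes "hi \<le> n" "lo \<le> t" "t < hi"
  shows "\<exists>C B g. unimod n C B \<and> window n lo hi C \<and> window n lo hi B \<and>
           (\<forall>i<n. lo \<le> i \<and> i < hi \<longrightarrow> mvi n C P i = (if i = t then g else 0))"
proof (induction "mu lo hi P" arbitrary: P rule: less_induct)
  case less
  show ?case
  proof (cases "\<exists>a b. a \<noteq> b \<and> lo \<le> a \<and> a < hi \<and> lo \<le> b \<and> b < hi \<and> P a \<noteq> 0 \<and> P b \<noteq> 0 \<and> \<bar>P b\<bar> \<le> \<bar>P a\<bar>")
    case True
    then obtain a b where ab: "a \<noteq> b" "lo \<le> a" "a < hi" "lo \<le> b" "b < hi" "P a \<noteq> 0" "P b \<noteq> 0" "\<bar>P b\<bar> \<le> \<bar>P a\<bar>"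
      by blast
    define c where "c = - (sgn (P a) * sgn (P b))"
    define P' where "P' = mvi n (elem a b c) P"
    have an: "a < n" "b < n" using ab assms by auto
    have P'x: "P' x = P x + (if x = a then c * P b else 0)" if "x < n" for x
      unfolding P'_def using mvi_elem[OF that an(2)] by simp
    have lt: "\<bar>P' a\<bar> < \<bar>P a\<bar>" using P'x[OF an(1)] abs_step[OF ab(7,8)] by (simp add: c_def)
    have fin: "finite {lo..<hi}" by simp
    have "mu lo hi P' = nat \<bar>P' a\<bar> + (\<Sum>i\<in>{lo..<hi}-{a}. nat \<bar>P' i\<bar>)"
      unfolding mu_def using ab by (subst sum.remove[OF fin]) auto
    also have "(\<Sum>i\<in>{lo..<hi}-{a}. nat \<bar>P' i\<bar>) = (\<Sum>i\<in>{lo..<hi}-{a}. nat \<bar>P i\<bar>)"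
      using assms by (intro sum.cong) (auto simp: P'x)
    also have "nat \<bar>P' a\<bar> + (\<Sum>i\<in>{lo..<hi}-{a}. nat \<bar>P i\<bar>) < nat \<bar>P a\<bar> + (\<Sum>i\<in>{lo..<hi}-{a}. nat \<bar>P i\<bar>)"
      using lt by simp
    also have "\<dots> = mu lo hi P"
      unfolding mu_def using ab sum.remove[OF fin, of a "\<lambda>i. nat \<bar>P i\<bar>"] by simp
    finally have "mu lo hi P' < mu lo hi P" .
    from less(1)[OF this] obtain C' B' g where IH: "unimod n C' B'" "window n lo hi C'" "window n lo hi B'"
      "\<forall>i<n. lo \<le> i \<and> i < hi \<longrightarrow> mvi n C' P' i = (if i = t then g else 0)" by blast
    have U: "unimod n (mmul n C' (elem a b c)) (mmul n (elem a b (-c)) B')"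
      using unimod_mul[OF unimod_elem[OF ab(1) an] IH(1)] .
    have W1: "window n lo hi (mmul n C' (elem a b c))"
      using window_mul[OF IH(2) window_elem[OF ab(2,3,4,5)]] .
    have W2: "window n lo hi (mmul n (elem a b (-c)) B')"
      using window_mul[OF window_elem[OF ab(2,3,4,5)] IH(3)] .
    have "\<forall>i<n. lo \<le> i \<and> i < hi \<longrightarrow> mvi n (mmul n C' (elem a b c)) P i = (if i = t then g else 0)"
      using IH(4) by (simp add: mvi_mmul P'_def)
    thus ?thesis using U W1 W2 by blast
  next
    case False
    hence F: "\<And>a b. a \<noteq> b \<Longrightarrow> lo \<le> a \<Longrightarrow> a < hi \<Longrightarrow> lo \<le> b \<Longrightarrow> b < hi \<Longrightarrow> P a \<noteq> 0 \<Longrightarrow> P b = 0"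
      by (metis linorder_le_cases)
    show ?thesis
    proof (cases "\<exists>a. lo \<le> a \<and> a < hi \<and> a \<noteq> t \<and> P a \<noteq> 0")
      case True
      then obtain a where a: "lo \<le> a" "a < hi" "a \<noteq> t" "P a \<noteq> 0" by blast
      have an: "a < n" "t < n" using a assms by auto
      have "\<forall>i<n. lo \<le> i \<and> i < hi \<longrightarrow> mvi n (swm a t) P i = (if i = t then P a else 0)"
        using F[OF _ a(1,2) _ _ a(4)] a assms by (auto simp: mvi_swm[OF _ an] sw_def)
      moreover have "window n lo hi (swm a t)" using window_swm a assms by auto
      ultimately show ?thesis using unimod_swm[OF an] by blast
    next
      case False
      have "\<forall>i<n. lo \<le> i \<and> i < hi \<longrightarrow> mvi n idm P i = (if i = t then P t else 0)"
        using False by (auto simp: mvi_idm)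
      thus ?thesis using unimod_idm window_idm by blast
    qed
  qed
qed




lemma dep:
  "finite I \<Longrightarrow> card I > s \<Longrightarrow> (\<forall>i\<in>I. \<forall>j\<ge>s. b i j = (0::int)) \<Longrightarrow>
    \<exists>c. (\<forall>j. (\<Sum>i\<in>I. c i * b i j) = 0) \<and> (\<exists>i\<in>I. c i \<noteq> 0)"
proof (induction s arbitrary: I b)
  case 0
  then obtain i0 where i0: "i0 \<in> I" by (metis card.empty ex_in_conv less_irrefl)
  define c where "c = (\<lambda>i. if i = i0 then (1::int) else 0)"
  have "(\<Sum>i\<in>I. c i * b i j) = 0" for j
    using 0 i0 by (simp add: c_def)
  moreover have "c i0 \<noteq> 0" by (simp add: c_def)
  ultimately show ?case using i0 by blast
next
  case (Suc s)
  show ?case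
  proof (cases "\<forall>i\<in>I. b i s = 0")
    case True
    have "\<forall>i\<in>I. \<forall>j\<ge>s. b i j = 0"
      using True Suc.prems(3) by (metis Suc_leI le_neq_implies_less)
    thus ?thesis using Suc.IH[OF Suc.prems(1)] Suc.prems(2) by simp
  next
    case False
    then obtain p where p: "p \<in> I" "b p s \<noteq> 0" by blast
    define b' where "b' = (\<lambda>i j. b p s * b i j - b i s * b p j)"
    have fin: "finite (I - {p})" using Suc.prems(1) by simp
    have card: "card (I - {p}) > s" using Suc.prems(1,2) p by simp
    have supp: "\<forall>i\<in>I - {p}. \<forall>j\<ge>s. b' i j = 0"
    proof (intro ballI allI impI)
      fix i j assume "i \<in> I - {p}" "s \<le> j"
      show "b' i j = 0"
      proof (cases "j = s")
        case True thus ?thesis by (simp add: b'_def)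
      next
        case False
        hence "Suc s \<le> j" using \<open>s \<le> j\<close> by simp
        thus ?thesis using Suc.prems(3) p \<open>i \<in> I - {p}\<close> by (simp add: b'_def)
      qed
    qed
    obtain c' where c': "\<forall>j. (\<Sum>i\<in>I - {p}. c' i * b' i j) = 0" "\<exists>i\<in>I - {p}. c' i \<noteq> 0"
      using Suc.IH[OF fin card supp] by blast
    define c where "c = (\<lambda>i. if i = p then - (\<Sum>k\<in>I - {p}. c' k * b k s) else c' i * b p s)"
    have "(\<Sum>i\<in>I. c i * b i j) = 0" for j
    proof -
      have "(\<Sum>i\<in>I. c i * b i j) = c p * b p j + (\<Sum>i\<in>I - {p}. c i * b i j)"
        using sum.remove[OF Suc.prems(1) p(1)] by blast
      also have "(\<Sum>i\<in>I - {p}. c i * b i j) = (\<Sum>i\<in>I - {p}. c' i * b p s * b i j)"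
        by (intro sum.cong) (auto simp: c_def)
      also have "c p * b p j = - (\<Sum>k\<in>I - {p}. c' k * b k s * b p j)"
        by (simp add: c_def sum_distrib_right)
      finally have "(\<Sum>i\<in>I. c i * b i j) = (\<Sum>i\<in>I - {p}. c' i * b p s * b i j - c' i * b i s * b p j)"
        by (simp add: sum_subtractf)
      also have "\<dots> = (\<Sum>i\<in>I - {p}. c' i * b' i j)"
        by (intro sum.cong) (auto simp: b'_def algebra_simps)
      finally show ?thesis using c' by simp
    qed
    moreover obtain i0 where "i0 \<in> I - {p}" "c' i0 \<noteq> 0" using c' by blast
    hence "i0 \<in> I" "c i0 \<noteq> 0" using p by (auto simp: c_def)
    ultimately show ?thesis by blast
  qed
qed

lemma zrank_span:
  assumes "\<forall>i<s. d i \<noteq> (0::int)"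
  shows "zrank {v. \<exists>c :: nat \<Rightarrow> int. v = (\<lambda>j. \<Sum>i<s. c i * (d i * std_basis i j))} = s"
  unfolding zrank_def
proof (rule Greatest_equality)
  let ?M = "{v. \<exists>c :: nat \<Rightarrow> int. v = (\<lambda>j. \<Sum>i<s. c i * (d i * std_basis i j))}"
  define b where "b = (\<lambda>i j. d i * std_basis i j)"
  have "b i \<in> ?M" if "i < s" for i
  proof -
    have "b i = (\<lambda>j. \<Sum>k<s. (if k = i then 1 else 0) * (d k * std_basis k j))"
      using that by (auto simp: b_def delta_c[where c = 1, simplified] intro!: ext)
    thus ?thesis by (simp only: mem_Collect_eq) (rule exI[of _ "\<lambda>k. if k = i then (1::int) else 0"], simp)
  qed
  moreover have "zlin_indep s b"
    unfolding zlin_indep_def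
  proof (intro allI impI)
    fix c :: "nat \<Rightarrow> int" and i
    assume h: "\<forall>j. (\<Sum>i<s. c i * b i j) = 0" and "i < s"
    have "(\<Sum>k<s. c k * b k i) = (\<Sum>k<s. c k * d k * (if k = i then 1 else 0))"
      by (intro sum.cong) (auto simp: b_def std_basis_def)
    also have "\<dots> = c i * d i" using \<open>i < s\<close> by (simp add: delta_r)
    finally show "c i = 0" using h assms \<open>i < s\<close> by auto
  qed
  ultimately show "\<exists>b. (\<forall>i<s. b i \<in> ?M) \<and> zlin_indep s b" by blast
next
  fix m
  assume "\<exists>b. (\<forall>i<m. b i \<in> {v. \<exists>c :: nat \<Rightarrow> int. v = (\<lambda>j. \<Sum>i<s. c i * (d i * std_basis i j))}) \<and> zlin_indep m b"
  then obtain b where b: "\<forall>i<m. \<exists>c :: nat \<Rightarrow> int. b i = (\<lambda>j. \<Sum>i<s. c i * (d i * std_basis i j))" "zlin_indep m b"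
    by auto
  show "m \<le> s"
  proof (rule ccontr)
    assume "\<not> m \<le> s"
    hence "card {..<m} > s" by simp
    moreover have "\<forall>i\<in>{..<m}. \<forall>j\<ge>s. b i j = 0"
    proof (intro ballI allI impI)
      fix i j assume "i \<in> {..<m}" "s \<le> j"
      then obtain c where "b i = (\<lambda>j. \<Sum>i<s. c i * (d i * std_basis i j))" using b(1) by auto
      thus "b i j = 0" using \<open>s \<le> j\<close> by (auto simp: std_basis_def intro!: sum.neutral)
    qed
    ultimately obtain c where c: "\<forall>j. (\<Sum>i<m. c i * b i j) = 0" "\<exists>i<m. c i \<noteq> 0"
      using dep[of "{..<m}" s b] by auto
    thus False using b(2) unfolding zlin_indep_def by blast
  qed
qed

lemma resmod_cong: assumes "\<And>i. i < n \<Longrightarrow> w i = w' i" shows "resonance_module n w = resonance_module n w'"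
proof -
  have "(\<Sum>i<n. real_of_int (k i) * w i) = (\<Sum>i<n. real_of_int (k i) * w' i)" for k
    by (rule sum.cong) (auto simp: assms)
  thus ?thesis unfolding resonance_module_def by simp
qed

definition phi :: "nat \<Rightarrow> (nat \<Rightarrow> nat \<Rightarrow> int) \<Rightarrow> (nat \<Rightarrow> int) \<Rightarrow> nat \<Rightarrow> int" where
  "phi n A k = (\<lambda>j. if j < n then \<Sum>i<n. k i * A i j else 0)"

lemma phi_zvec: "phi n A k \<in> zvec n"
  unfolding phi_def zvec_def by auto

lemma phi_dot: "(\<Sum>j<n. of_int (phi n A k j) * w j) = (\<Sum>i<n. of_int (k i) * mat_vec n A w i)"
proof -
  have "(\<Sum>j<n. of_int (phi n A k j) * w j) = (\<Sum>j<n. \<Sum>i<n. of_int (k i) * of_int (A i j) * w j)"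
    unfolding phi_def by (simp add: sum_distrib_right)
  also have "\<dots> = (\<Sum>i<n. \<Sum>j<n. of_int (k i) * of_int (A i j) * w j)" by (rule sum.swap)
  also have "\<dots> = (\<Sum>i<n. of_int (k i) * mat_vec n A w i)"
    unfolding mat_vec_def by (simp add: sum_distrib_left mult.assoc)
  finally show ?thesis .
qed

lemma phi_inv: assumes "unimod n A B" "v \<in> zvec n" shows "phi n B (phi n A v) = v"
proof
  fix j
  show "phi n B (phi n A v) j = v j"
  proof (cases "j < n")
    case True
    have "phi n B (phi n A v) j = (\<Sum>l<n. \<Sum>i<n. v i * A i l * B l j)"
      unfolding phi_def using True by (simp add: sum_distrib_right)
    also have "\<dots> = (\<Sum>i<n. \<Sum>l<n. v i * A i l * B l j)" by (rule sum.swap)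
    also have "\<dots> = (\<Sum>i<n. v i * mmul n A B i j)"
      unfolding mmul_def by (simp add: sum_distrib_left mult.assoc)
    also have "\<dots> = (\<Sum>i<n. v i * (if i = j then 1 else 0))"
      using assms(1) True by (intro sum.cong) (auto simp: unimod_def)
    finally show ?thesis using True by (simp add: delta_r)
  next
    case False thus ?thesis using assms(2) by (simp add: phi_def zvec_def)
  qed
qed

lemma phi_lin: "phi n A (\<lambda>j. \<Sum>i<m. c i * b i j) = (\<lambda>j. \<Sum>i<m. c i * phi n A (b i) j)"
proof
  fix j
  show "phi n A (\<lambda>j. \<Sum>i<m. c i * b i j) j = (\<Sum>i<m. c i * phi n A (b i) j)"
  proof (cases "j < n")
    case True
    have "phi n A (\<lambda>j. \<Sum>i<m. c i * b i j) j = (\<Sum>l<n. \<Sum>i<m. c i * b i l * A l j)"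
      unfolding phi_def using True by (simp add: sum_distrib_right)
    also have "\<dots> = (\<Sum>i<m. \<Sum>l<n. c i * b i l * A l j)" by (rule sum.swap)
    finally show ?thesis using True by (simp add: phi_def sum_distrib_left mult.assoc)
  qed (simp add: phi_def)
qed

lemma indep_transfer:
  assumes "unimod n A B" "\<forall>i<m. b i \<in> resonance_module n (mat_vec n A w)" "zlin_indep m b"
  shows "\<exists>b'. (\<forall>i<m. b' i \<in> resonance_module n w) \<and> zlin_indep m b'"
proof (intro exI conjI)
  show "\<forall>i<m. phi n A (b i) \<in> resonance_module n w"
    using assms(2) by (auto simp: resonance_module_def phi_zvec phi_dot)
  show "zlin_indep m (\<lambda>i. phi n A (b i))"
    unfolding zlin_indep_def
  proof (intro allI impI)
    fix c :: "nat \<Rightarrow> int" and i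
    assume h: "\<forall>j. (\<Sum>i<m. c i * phi n A (b i) j) = 0" "i < m"
    define v where "v = (\<lambda>j. \<Sum>i<m. c i * b i j)"
    have vz: "v \<in> zvec n" using assms(2) by (auto simp: v_def zvec_def resonance_module_def)
    have "phi n A v = (\<lambda>_. 0)" using h(1) by (simp add: v_def phi_lin)
    hence "phi n B (phi n A v) = phi n B (\<lambda>_. 0)" by simp
    also have "\<dots> = (\<lambda>_. 0)" unfolding phi_def by (rule ext) simp
    finally have "phi n B (phi n A v) = (\<lambda>_. 0)" .
    hence "v = (\<lambda>_. 0)" using phi_inv[OF assms(1) vz] by simp
    hence "\<forall>j. (\<Sum>i<m. c i * b i j) = 0" by (metis v_def)
    thus "c i = 0" using assms(3) h(2) unfolding zlin_indep_def by blast
  qed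
qed

lemma zrank_transfer:
  assumes "unimod n A B"
  shows "zrank (resonance_module n (mat_vec n A w)) = zrank (resonance_module n w)"
proof -
  have e: "resonance_module n (mat_vec n B (mat_vec n A w)) = resonance_module n w"
    by (rule resmod_cong) (simp add: mat_vec_inv[OF assms])
  have "(\<exists>b. (\<forall>i<m. b i \<in> resonance_module n (mat_vec n A w)) \<and> zlin_indep m b) =
        (\<exists>b. (\<forall>i<m. b i \<in> resonance_module n w) \<and> zlin_indep m b)" for m
    using indep_transfer[OF assms] indep_transfer[OF unimod_sym[OF assms], of m _ "mat_vec n A w"] e
    by metis
  thus ?thesis unfolding zrank_def by simp
qed




lemma sum_split_shift:
  fixes s n :: nat
  assumes "s \<le> n"
  shows "(\<Sum>i<n. f i) = (\<Sum>i<s. f i) + (\<Sum>j<n-s. f (s + j))"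
proof -
  have "{..<n} = {..<s} \<union> {s..<n}" using assms by fastforce
  hence "(\<Sum>i<n. f i) = (\<Sum>i<s. f i) + (\<Sum>i\<in>{s..<n}. f i)"
    by (metis sum.union_disjoint finite_lessThan finite_atLeastLessThan ivl_disj_int_one(2))
  also have "(\<Sum>i\<in>{s..<n}. f i) = (\<Sum>j\<in>{0..<n-s}. f (j + s))"
    using sum.shift_bounds_nat_ivl[of f 0 s "n-s"] assms by simp
  finally show ?thesis by (simp add: atLeast0LessThan add.commute)
qed

lemma resonant_cong: "(\<And>i. i < n \<Longrightarrow> w i = w' i) \<Longrightarrow> resonant n w = resonant n w'"
  unfolding resonant_def using resmod_cong by metis

lemma zero_in_resmod: "(\<lambda>_. 0) \<in> resonance_module n w"
  unfolding resonance_module_def zvec_def by simp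

lemma nonres_iff: "\<not> resonant n w \<longleftrightarrow> resonance_module n w = {\<lambda>_. 0}"
  unfolding resonant_def by simp

lemma rat_step:
  assumes "s < n" "k \<in> zvec n" "k \<noteq> (\<lambda>_. 0)" "\<forall>i<s. k i = 0"
    and "(\<Sum>i<n. of_int (k i) * w i) \<in> \<int>"
  shows "\<exists>A B. unimod n A B \<and> (\<forall>i<s. mat_vec n A w i = w i) \<and> mat_vec n A w s \<in> \<rat>"
proof -
  obtain C B g where CB: "unimod n C B" "window n s n C" "window n s n B"
    "\<forall>i<n. s \<le> i \<and> i < n \<longrightarrow> mvi n C k i = (if i = s then g else 0)"
    using euclid[of n n s s k] assms(1) by auto
  have Ck: "mvi n C k i = (if i = s then g else 0)" if "i < n" for i
  proof (cases "s \<le> i")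
    case False
    thus ?thesis using mvi_window_out[OF CB(2) that] assms(4) that by auto
  qed (use CB(4) that in auto)
  have kj: "k j = B j s * g" if "j < n" for j
  proof -
    have "k j = mvi n B (mvi n C k) j" using mvi_inv[OF CB(1) that] by simp
    also have "\<dots> = (\<Sum>i<n. B j i * (if i = s then g else 0))"
      unfolding mvi_def[of n B] by (intro sum.cong) (auto simp: Ck)
    also have "\<dots> = (\<Sum>i<n. if i = s then B j s * g else 0)" by (rule sum.cong) auto
    also have "\<dots> = B j s * g" using assms(1) by simp
    finally show ?thesis .
  qed
  have g0: "g \<noteq> 0"
  proof
    assume "g = 0"
    hence "k = (\<lambda>_. 0)" using kj assms(2) by (auto simp: zvec_def intro!: ext) (metis not_le)
    thus False using assms(3) by simp
  qed
  define A where "A = tr B"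
  have U: "unimod n A (tr C)" unfolding A_def using unimod_tr[OF unimod_sym[OF CB(1)]] .
  have WA: "window n s n A" unfolding A_def using window_tr[OF CB(3)] .
  have "of_int g * mat_vec n A w s = (\<Sum>j<n. of_int (k j) * w j)"
    unfolding mat_vec_def A_def tr_def
    by (simp add: sum_distrib_left kj mult.commute mult.left_commute)
  hence "of_int g * mat_vec n A w s \<in> \<int>" using assms(5) by simp
  hence "of_int g * mat_vec n A w s \<in> \<rat>" using Ints_subset_Rats by blast
  hence "(of_int g * mat_vec n A w s) / of_int g \<in> \<rat>" by (intro Rats_divide) auto
  moreover have "(of_int g * mat_vec n A w s) / of_int g = mat_vec n A w s" using g0 by simp
  ultimately have "mat_vec n A w s \<in> \<rat>" by simp
  moreover have "\<forall>i<s. mat_vec n A w i = w i"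
    using mat_vec_window_out[OF WA] assms(1) by auto
  ultimately show ?thesis using U by blast
qed

lemma split_lemma:
  fixes w :: "nat \<Rightarrow> real"
  assumes "s \<le> n" "\<forall>i<s. w i \<in> \<rat>"
  shows "\<exists>A B s'. unimod n A B \<and> s \<le> s' \<and> s' \<le> n \<and> (\<forall>i<s'. mat_vec n A w i \<in> \<rat>) \<and>
      \<not> resonant (n - s') (\<lambda>i. mat_vec n A w (s' + i))"
  using assms
proof (induction "n - s" arbitrary: s w rule: less_induct)
  case less
  have idm_w: "mat_vec n idm w i = w i" if "i < n" for i
  proof -
    have "mat_vec n idm w i = (\<Sum>j<n. (if i = j then 1 else 0) * w j)"
      unfolding mat_vec_def idm_def by (rule sum.cong) auto
    thus ?thesis using that by (simp add: delta_l)
  qed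
  show ?case
  proof (cases "resonant (n - s) (\<lambda>i. w (s + i))")
    case False
    hence "\<not> resonant (n - s) (\<lambda>i. mat_vec n idm w (s + i))"
      using resonant_cong[of "n - s" "\<lambda>i. w (s + i)" "\<lambda>i. mat_vec n idm w (s + i)"] idm_w by auto
    moreover have "\<forall>i<s. mat_vec n idm w i \<in> \<rat>" using less.prems idm_w by auto
    ultimately show ?thesis using unimod_idm less.prems by blast
  next
    case True
    then obtain k' where k': "k' \<in> resonance_module (n - s) (\<lambda>i. w (s + i))" "k' \<noteq> (\<lambda>_. 0)"
      unfolding resonant_def using zero_in_resmod by blast
    then obtain i0 where i0: "k' i0 \<noteq> 0" by auto
    have i0n: "i0 < n - s" using k'(1) i0 by (auto simp: resonance_module_def zvec_def) (metis not_le)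
    hence sn: "s < n" by simp
    define k where "k = (\<lambda>i. if s \<le> i then k' (i - s) else 0)"
    have kz: "k \<in> zvec n" using k'(1) by (auto simp: k_def zvec_def resonance_module_def)
    have kn: "k \<noteq> (\<lambda>_. 0)" using i0 by (auto simp: k_def dest!: fun_cong[of _ _ "s + i0"])
    have "(\<Sum>i<n. of_int (k i) * w i) = (\<Sum>i<s. of_int (k i) * w i) + (\<Sum>j<n-s. of_int (k (s+j)) * w (s+j))"
      using sum_split_shift[of s n] sn by simp
    also have "\<dots> = (\<Sum>j<n-s. of_int (k' j) * w (s+j))" by (simp add: k_def)
    finally have kres: "(\<Sum>i<n. of_int (k i) * w i) \<in> \<int>"
      using k'(1) by (simp add: resonance_module_def)
    obtain A1 B1 where A1: "unimod n A1 B1" "\<forall>i<s. mat_vec n A1 w i = w i" "mat_vec n A1 w s \<in> \<rat>"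
      using rat_step[OF sn kz kn _ kres] by (auto simp: k_def)
    have rat1: "\<forall>i<Suc s. mat_vec n A1 w i \<in> \<rat>" using A1 less.prems(2) less_Suc_eq by auto
    have "\<exists>A2 B2 s'. unimod n A2 B2 \<and> Suc s \<le> s' \<and> s' \<le> n \<and>
       (\<forall>i<s'. mat_vec n A2 (mat_vec n A1 w) i \<in> \<rat>) \<and>
       \<not> resonant (n - s') (\<lambda>i. mat_vec n A2 (mat_vec n A1 w) (s' + i))"
      using less.hyps[of "Suc s" "mat_vec n A1 w"] sn rat1 by auto
    then obtain A2 B2 s' where A2: "unimod n A2 B2" "Suc s \<le> s'" "s' \<le> n"
       "\<forall>i<s'. mat_vec n A2 (mat_vec n A1 w) i \<in> \<rat>"
       "\<not> resonant (n - s') (\<lambda>i. mat_vec n A2 (mat_vec n A1 w) (s' + i))" by blast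
    have U: "unimod n (mmul n A2 A1) (mmul n B1 B2)" using unimod_mul[OF A1(1) A2(1)] .
    show ?thesis
      using U A2 by (intro exI[of _ "mmul n A2 A1"] exI[of _ "mmul n B1 B2"] exI[of _ s'])
        (simp add: mat_vec_mmul)
  qed
qed

lemma common_denom: "\<forall>i<(s::nat). x i \<in> \<rat> \<Longrightarrow> \<exists>L::int. L > 0 \<and> (\<forall>i<s. of_int L * (x i :: real) \<in> \<int>)"
proof (induction s)
  case 0 thus ?case by (intro exI[of _ 1]) auto
next
  case (Suc s)
  then obtain L where L: "L > 0" "\<forall>i<s. of_int L * x i \<in> \<int>" by auto
  have "x s \<in> \<rat>" using Suc.prems by auto
  then obtain a b where ab: "b > 0" "x s = of_int a / of_int b" by (elim Rats_cases') blast
  have "of_int (L * b) * x i \<in> \<int>" if "i < Suc s" for i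
  proof (cases "i = s")
    case True thus ?thesis using ab by simp
  next
    case False
    hence "of_int (L * b) * x i = of_int b * (of_int L * x i)" by simp
    thus ?thesis using L(2) False that by (metis Ints_mult Ints_of_int less_SucE)
  qed
  thus ?case using L ab by (intro exI[of _ "L * b"]) auto
qed

lemma span_elem: "(\<lambda>j. \<Sum>i<(s::nat). c i * (d i * std_basis i j)) j = (if j < s then c j * d j else (0::int))"
proof -
  have "(\<Sum>i<s. c i * (d i * std_basis i j)) = (\<Sum>i<s. (if j = i then c i * d i else 0))"
    by (intro sum.cong) (auto simp: std_basis_def)
  thus ?thesis by (simp add: sum.delta)
qed

lemma period_transfer:
  assumes "unimod n A B"
  shows "period n (mat_vec n A w) = period n w"
proof -
  have "(\<forall>i<n. real T * mat_vec n A w i \<in> \<int>) \<longleftrightarrow> (\<forall>i<n. real T * w i \<in> \<int>)" for T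
  proof
    have gen: "\<forall>i<n. real T * mat_vec n X v i \<in> \<int>" if "\<forall>i<n. real T * v i \<in> \<int>" for X v
    proof (intro allI impI)
      fix i
      have "real T * mat_vec n X v i = (\<Sum>j<n. of_int (X i j) * (real T * v j))"
        unfolding mat_vec_def by (simp add: sum_distrib_left mult.left_commute)
      moreover have "(\<Sum>j<n. of_int (X i j) * (real T * v j)) \<in> \<int>"
        using that by (intro Ints_sum Ints_mult[OF Ints_of_int]) auto
      ultimately show "real T * mat_vec n X v i \<in> \<int>" by simp
    qed
    show "\<forall>i<n. real T * w i \<in> \<int>" if "\<forall>i<n. real T * mat_vec n A w i \<in> \<int>"
      using gen[OF that, of B] mat_vec_inv[OF assms] by simp
    show "\<forall>i<n. real T * mat_vec n A w i \<in> \<int>" if "\<forall>i<n. real T * w i \<in> \<int>"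
      using gen[OF that] by simp
  qed
  thus ?thesis unfolding period_def by simp
qed

lemma nf_period:
  fixes T :: nat and a :: int
  assumes "s \<ge> 1" "T > 0" "coprime a (int T)" "\<forall>i<s. y i = (if i = s - 1 then of_int a / of_nat T else 0)"
  shows "period s y = T"
  unfolding period_def
proof (rule Least_equality)
  show "0 < T \<and> (\<forall>i<s. real T * y i \<in> \<int>)" using assms by auto
next
  fix T' assume h: "0 < T' \<and> (\<forall>i<s. real T' * y i \<in> \<int>)"
  hence "real T' * (of_int a / of_nat T) \<in> \<int>" using assms by (metis diff_less less_numeral_extra(1) order_less_le_trans)
  then obtain z where "real T' * (of_int a / of_nat T) = of_int z" by (auto elim: Ints_cases)
  hence "of_int (int T' * a) = (of_int (z * int T) :: real)" using assms(2) by (simp add: field_simps)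
  hence "int T' * a = z * int T" by linarith
  hence "int T dvd int T' * a" by simp
  hence "int T dvd int T'" using assms(3) by (metis coprime_commute coprime_dvd_mult_left_iff)
  thus "T \<le> T'" using h by (simp add: dvd_imp_le)
qed




lemma y_sum:
  fixes s n :: nat and T :: nat
  assumes "1 \<le> s" "s \<le> n" "\<forall>i<s. y i = (if i = s - 1 then of_int a / of_nat T else 0)"
  shows "(\<Sum>i<n. of_int (k i) * y i) = of_int (k (s-1)) * (of_int a / of_nat T) + (\<Sum>j<n-s. of_int (k (s+j)) * y (s+j))"
proof -
  have "(\<Sum>i<s. of_int (k i) * y i) = (\<Sum>i<s. if i = s - 1 then of_int (k (s-1)) * (of_int a / of_nat T) else 0)"
    using assms(3) by (intro sum.cong) auto
  also have "\<dots> = of_int (k (s-1)) * (of_int a / of_nat T)" using assms(1) by (simp add: sum.delta')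
  finally show ?thesis using sum_split_shift[OF assms(2), of "\<lambda>i. of_int (k i) * y i"] by simp
qed

lemma nf_module:
  fixes T :: nat and a :: int and s n :: nat and y :: "nat \<Rightarrow> real" and d :: "nat \<Rightarrow> int"
  assumes s1: "1 \<le> s" and sn: "s \<le> n" and T0: "T > 0" and cop: "coprime a (int T)"
    and yv: "\<forall>i<s. y i = (if i = s - 1 then of_int a / of_nat T else 0)"
    and nr: "\<not> resonant (n - s) (\<lambda>i. y (s + i))"
    and dv: "\<forall>i<s. d i = (if i = s - 1 then int T else 1)"
  shows "resonance_module n y = {v. \<exists>c::nat\<Rightarrow>int. v = (\<lambda>j. \<Sum>i<s. c i * (d i * std_basis i j))}"
proof (intro set_eqI iffI)
  fix k assume k: "k \<in> resonance_module n y"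
  define S where "S = (\<Sum>i<n. of_int (k i) * y i)"
  have Sint: "S \<in> \<int>" using k by (simp add: S_def resonance_module_def)
  have kz: "k \<in> zvec n" using k by (simp add: resonance_module_def)
  have Seq: "S = of_int (k (s-1)) * (of_int a / of_nat T) + (\<Sum>j<n-s. of_int (k (s+j)) * y (s+j))"
    unfolding S_def by (rule y_sum[OF s1 sn yv])
  define K where "K = (\<lambda>j. if j < n - s then int T * k (s + j) else 0)"
  have "(\<Sum>j<n-s. of_int (K j) * y (s+j)) = of_nat T * (\<Sum>j<n-s. of_int (k (s+j)) * y (s+j))"
    unfolding K_def by (simp add: sum_distrib_left mult.assoc)
  also have "\<dots> = of_nat T * S - of_int (k (s-1) * a)" using Seq T0 by (simp add: field_simps)
  finally have "(\<Sum>j<n-s. of_int (K j) * y (s+j)) \<in> \<int>" using Sint by simp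
  moreover have "K \<in> zvec (n - s)" by (simp add: K_def zvec_def)
  ultimately have "K \<in> resonance_module (n - s) (\<lambda>i. y (s + i))" by (simp add: resonance_module_def)
  hence "K = (\<lambda>_. 0)" using nr unfolding nonres_iff by blast
  hence ktail: "k (s + j) = 0" if "j < n - s" for j
    using that T0 by (auto simp: K_def dest!: fun_cong[of _ _ j])
  have "S = of_int (k (s-1)) * (of_int a / of_nat T)" using Seq ktail by simp
  then obtain z where "of_int (k (s-1)) * (of_int a / of_nat T) = (of_int z :: real)" using Sint by (auto elim: Ints_cases)
  hence "of_int (k (s-1) * a) = (of_int (z * int T) :: real)" using T0 by (simp add: field_simps)
  hence "k (s-1) * a = z * int T" by linarith
  hence "int T dvd k (s-1) * a" by simp
  hence Tdvd: "int T dvd k (s-1)" using cop by (metis coprime_commute coprime_dvd_mult_left_iff)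
  define c where "c = (\<lambda>i. if i = s - 1 then k i div int T else k i)"
  have "k = (\<lambda>j. \<Sum>i<s. c i * (d i * std_basis i j))"
  proof
    fix j
    show "k j = (\<lambda>j. \<Sum>i<s. c i * (d i * std_basis i j)) j"
      unfolding span_elem
    proof (cases "j < s")
      case True thus "k j = (if j < s then c j * d j else 0)"
        using dv Tdvd by (auto simp: c_def)
    next
      case False
      have "k j = 0"
      proof (cases "j < n")
        case True
        hence "k (s + (j - s)) = 0" using ktail[of "j - s"] False by simp
        thus ?thesis using False by simp
      next
        case False thus ?thesis using kz by (simp add: zvec_def)
      qed
      thus "k j = (if j < s then c j * d j else 0)" using False by simp
    qed
  qed
  thus "k \<in> {v. \<exists>c::nat\<Rightarrow>int. v = (\<lambda>j. \<Sum>i<s. c i * (d i * std_basis i j))}" by blast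
next
  fix v assume "v \<in> {v. \<exists>c::nat\<Rightarrow>int. v = (\<lambda>j. \<Sum>i<s. c i * (d i * std_basis i j))}"
  then obtain c where vc: "v = (\<lambda>j. \<Sum>i<s. c i * (d i * std_basis i j))" by blast
  have vj: "v j = (if j < s then c j * d j else 0)" for j using vc span_elem by metis
  have "v \<in> zvec n" using sn by (auto simp: zvec_def vj)
  moreover have "(\<Sum>i<n. of_int (v i) * y i) = of_int (c (s-1) * a)"
    using y_sum[OF s1 sn yv, of v] vj dv s1 T0 by simp
  ultimately show "v \<in> resonance_module n y" by (simp add: resonance_module_def)
qed

lemma indep_std:
  assumes "\<forall>i<s. d i \<noteq> (0::int)"
  shows "zlin_indep s (\<lambda>i j. d i * std_basis i j)"
  unfolding zlin_indep_def
proof (intro allI impI)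
  fix c :: "nat \<Rightarrow> int" and i
  assume h: "\<forall>j. (\<Sum>i<s. c i * (d i * std_basis i j)) = 0" and "i < s"
  have "(\<Sum>k<s. c k * (d k * std_basis k i)) = (if i < s then c i * d i else 0)"
    using span_elem[where s=s and c=c and d=d and j=i] by simp
  thus "c i = 0" using h assms \<open>i < s\<close> by auto
qed




theorem proposition3p3:
  fixes n r :: nat and \<omega> :: "nat \<Rightarrow> real"
  assumes "resonant n \<omega>"
    and "resonance_order n \<omega> = r"
    and "r \<ge> 1"
  shows "\<exists>A \<in> GL_int n. \<exists>d :: nat \<Rightarrow> int.
           (\<forall>i<r. d i > 0) \<and> (\<forall>i. i + 1 < r \<longrightarrow> d i dvd d (i + 1)) \<and>
           is_zbasis (resonance_module n (mat_vec n A \<omega>)) r (\<lambda>i. (\<lambda>j. d i * std_basis i j)) \<and>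
           rational_vec r (mat_vec n A \<omega>) \<and>
           int (period r (mat_vec n A \<omega>)) = d (r - 1) \<and>
           \<not> resonant (n - r) (\<lambda>i. mat_vec n A \<omega> (r + i)) \<and>
           (r = n \<longrightarrow>
              int (period n \<omega>) = d (n - 1) \<and>
              (\<exists>a :: nat \<Rightarrow> int. \<forall>i<n. mat_vec n A \<omega> i = of_int (a i) / of_int (d i)
                                       \<and> coprime (a i) (d i)))"
proof -
  obtain A1 B1 s where A1: "unimod n A1 B1" "s \<le> n" "\<forall>i<s. mat_vec n A1 \<omega> i \<in> \<rat>"
    "\<not> resonant (n - s) (\<lambda>i. mat_vec n A1 \<omega> (s + i))"
    using split_lemma[of 0 n \<omega>] by auto
  define x where "x = mat_vec n A1 \<omega>"
  have rx: "zrank (resonance_module n x) = r"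
    using zrank_transfer[OF A1(1)] assms(2) by (simp add: x_def resonance_order_def)
  have s1: "1 \<le> s"
  proof (rule ccontr)
    assume "\<not> 1 \<le> s"
    hence "s = 0" by simp
    hence "resonance_module n x = {\<lambda>_. 0}" using A1(4) by (simp add: x_def nonres_iff)
    also have "\<dots> = {v. \<exists>c::nat\<Rightarrow>int. v = (\<lambda>j. \<Sum>i<0. c i * ((\<lambda>_. 1) i * std_basis i j))}" by simp
    finally have "zrank (resonance_module n x) = 0" using zrank_span[of 0 "\<lambda>_. 1"] by simp
    thus False using rx assms(3) by simp
  qed
  obtain L :: int where L: "L > 0" "\<forall>i<s. of_int L * x i \<in> \<int>"
    using common_denom[of s x] A1(3) x_def by auto
  define P where "P = (\<lambda>i. if i < s then (SOME p. of_int p = of_int L * x i) else (0::int))"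
  have Pi: "of_int (P i) = of_int L * x i" if "i < s" for i
  proof -
    have "of_int L * x i \<in> \<int>" using L(2) that by auto
    then obtain p where "of_int L * x i = of_int p" by (rule Ints_cases)
    hence "\<exists>p. of_int p = of_int L * x i" by metis
    hence "of_int (SOME p. of_int p = of_int L * x i) = of_int L * x i" by (rule someI_ex)
    thus ?thesis using that unfolding P_def by simp
  qed
  obtain C B2 g where CB: "unimod n C B2" "window n 0 s C" "window n 0 s B2"
    "\<forall>i<n. 0 \<le> i \<and> i < s \<longrightarrow> mvi n C P i = (if i = s - 1 then g else 0)"
    using euclid[of s n 0 "s - 1" P] A1(2) s1 by auto
  define y where "y = mat_vec n C x"
  have yin: "y i = of_int (if i = s - 1 then g else 0) / of_int L" if "i < s" for i
  proof -
    have "y i = (\<Sum>j<n. of_int (C i j * P j) / of_int L)"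
      unfolding y_def mat_vec_def
    proof (intro sum.cong refl)
      fix j assume "j \<in> {..<n}"
      show "of_int (C i j) * x j = of_int (C i j * P j) / of_int L"
      proof (cases "j < s")
        case True thus ?thesis using Pi[OF True] L(1) by simp
      next
        case False
        hence "C i j = 0" using CB(2) \<open>j \<in> {..<n}\<close> that A1(2) unfolding window_def by auto
        thus ?thesis by simp
      qed
    qed
    also have "\<dots> = of_int (mvi n C P i) / of_int L"
      unfolding mvi_def by (simp add: sum_divide_distrib)
    finally show ?thesis using CB(4) that A1(2) by simp
  qed
  have yout: "y i = x i" if "s \<le> i" "i < n" for i
    using mat_vec_window_out[OF CB(2) that(2)] that by (simp add: y_def)
  define h where "h = gcd g L"
  define a where "a = g div h"
  define Ti where "Ti = L div h"
  have h0: "h > 0" using L(1) by (simp add: h_def)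
  have gh: "g = a * h" unfolding a_def h_def by simp
  have Lh: "L = Ti * h" unfolding Ti_def h_def by simp
  have "0 < Ti * h" using Lh L(1) by simp
  hence Ti0: "Ti > 0" using h0 by (simp add: zero_less_mult_iff)
  define T where "T = nat Ti"
  have T0: "T > 0" and TiT: "Ti = int T" using Ti0 by (auto simp: T_def)
  have cop: "coprime a (int T)" using div_gcd_coprime[of g L] L(1) by (simp add: a_def TiT[symmetric] Ti_def h_def)
  have gL: "(of_int g / of_int L :: real) = of_int a / of_nat T"
    using gh Lh TiT h0 by simp
  have yv: "\<forall>i<s. y i = (if i = s - 1 then of_int a / of_nat T else 0)"
    using yin gL by auto
  have nr: "\<not> resonant (n - s) (\<lambda>i. y (s + i))"
    using A1(4) resonant_cong[of "n - s" "\<lambda>i. y (s + i)" "\<lambda>i. x (s + i)"] yout by (simp add: x_def)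
  define Af where "Af = mmul n C A1"
  have U: "unimod n Af (mmul n B1 B2)" unfolding Af_def using unimod_mul[OF A1(1) CB(1)] .
  have yAf: "mat_vec n Af \<omega> = y" unfolding Af_def y_def x_def by (rule ext) (simp add: mat_vec_mmul)
  define d where "d = (\<lambda>i. if i = s - 1 then int T else 1)"
  have dv: "\<forall>i<s. d i = (if i = s - 1 then int T else 1)" by (simp add: d_def)
  have M: "resonance_module n y = {v. \<exists>c::nat\<Rightarrow>int. v = (\<lambda>j. \<Sum>i<s. c i * (d i * std_basis i j))}"
    using nf_module[OF s1 A1(2) T0 cop yv nr dv] .
  have dnz: "\<forall>i<s. d i \<noteq> 0" using T0 by (simp add: d_def)
  have "zrank (resonance_module n y) = r"
    using zrank_transfer[OF U, of \<omega>] assms(2) yAf by (simp add: resonance_order_def)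
  hence sr: "s = r" using M zrank_span[OF dnz] by simp
  have per: "period s y = T" using nf_period[OF s1 T0 cop yv] .
  have GL: "Af \<in> GL_int n" using unimod_GL[OF U] .
  have c1: "\<forall>i<s. 0 < d i" using T0 by (simp add: d_def)
  have c2: "\<forall>i. i + 1 < s \<longrightarrow> d i dvd d (i + 1)"
  proof (intro allI impI)
    fix i assume "i + 1 < s"
    hence "i \<noteq> s - 1" by simp
    thus "d i dvd d (i + 1)" by (simp add: d_def)
  qed
  have c3: "is_zbasis (resonance_module n y) s (\<lambda>i j. d i * std_basis i j)"
    unfolding is_zbasis_def by (rule conjI[OF indep_std[OF dnz] M])
  have c4: "rational_vec s y"
    unfolding rational_vec_def
  proof (intro allI impI)
    fix i assume "i < s"
    thus "y i \<in> \<rat>" using yv by (cases "i = s - 1") auto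
  qed
  have c5: "int (period s y) = d (s - 1)" using per by (simp add: d_def)
  have c6: "s = n \<longrightarrow> int (period n \<omega>) = d (n - 1) \<and>
      (\<exists>a. \<forall>i<n. y i = real_of_int (a i) / real_of_int (d i) \<and> coprime (a i) (d i))"
  proof
    assume rn: "s = n"
    have "period n \<omega> = period n y" using period_transfer[OF U, of \<omega>] yAf by simp
    hence P1: "int (period n \<omega>) = d (n - 1)" using c5 rn by simp
    define av where "av = (\<lambda>i. if i = n - 1 then a else (0::int))"
    have "\<forall>i<n. y i = real_of_int (av i) / real_of_int (d i) \<and> coprime (av i) (d i)"
    proof (intro allI impI)
      fix i assume "i < n"
      thus "y i = real_of_int (av i) / real_of_int (d i) \<and> coprime (av i) (d i)"
        using yv rn cop by (cases "i = n - 1") (simp_all add: d_def av_def)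
    qed
    hence "\<exists>a. \<forall>i<n. y i = real_of_int (a i) / real_of_int (d i) \<and> coprime (a i) (d i)"
      by (rule exI[of _ av])
    with P1 show "int (period n \<omega>) = d (n - 1) \<and>
      (\<exists>a. \<forall>i<n. y i = real_of_int (a i) / real_of_int (d i) \<and> coprime (a i) (d i))"
      by (rule conjI)
  qed
  have rs: "r = s" using sr by simp
  show ?thesis unfolding rs
    apply (intro bexI[OF _ GL] exI[of _ d] conjI c1 c2)
    using c3 c4 c5 c6 nr by (simp_all add: yAf)
qed


end
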